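(* For every $n\ge 2$, $\mathrm{isat}(n,\mathcal{V}_2)=\mathrm{isat}(n,\Lambda_2)=n+1$.
   Context: $\mathcal{B}_n$ denotes the Boolean lattice $(2^{[n]},\subseteq)$. A family $\mathcal{F}\subseteq 2^{[n]}$ (ordered by inclusion) is induced-$\mathcal{P}$-saturated if it contains no induced copy of $\mathcal{P}$ (an injection $f$ with $u\le v\iff f(u)\subseteq f(v)$) but every family $\mathcal{F}'$ with $\mathcal{F}\subsetneq\mathcal{F}'\subseteq 2^{[n]}$ contains one. $\mathrm{isat}(n,\mathcal{P})$ is the minimum size of an induced-$\mathcal{P}$-saturated family in $\mathcal{B}_n$. $\mathcal{V}_2$ is the three-element poset with one minimal element below two incomparable maximal elements; $\Lambda_2$ is the three-element poset with one maximal element above two incomparable minimal elements. *)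

theory Defs
  imports Main
begin

definition has_induced_copy :: "'p set \<Rightarrow> ('p \<Rightarrow> 'p \<Rightarrow> bool) \<Rightarrow> nat set set \<Rightarrow> bool" where
  "has_induced_copy P le F \<longleftrightarrow>
     (\<exists>f. inj_on f P \<and> f ` P \<subseteq> F \<and> (\<forall>u\<in>P. \<forall>v\<in>P. le u v \<longleftrightarrow> f u \<subseteq> f v))"

text \<open>The Boolean lattice B_n is the power set of [n] = {1..n}.\<close>

definition induced_saturated :: "nat \<Rightarrow> 'p set \<Rightarrow> ('p \<Rightarrow> 'p \<Rightarrow> bool) \<Rightarrow> nat set set \<Rightarrow> bool" where
  "induced_saturated n P le F \<longleftrightarrow>
     F \<subseteq> Pow {1..n} \<and> \<not> has_induced_copy P le F \<and>
     (\<forall>F'. F \<subset> F' \<and> F' \<subseteq> Pow {1..n} \<longrightarrow> has_induced_copy P le F')"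

definition isat :: "nat \<Rightarrow> 'p set \<Rightarrow> ('p \<Rightarrow> 'p \<Rightarrow> bool) \<Rightarrow> nat" where
  "isat n P le = Inf (card ` {F. induced_saturated n P le F})"

text \<open>V_2: element 0 below the incomparable elements 1 and 2.\<close>
definition V2_le :: "nat \<Rightarrow> nat \<Rightarrow> bool" where
  "V2_le u v \<longleftrightarrow> u = v \<or> u = 0"

text \<open>Lambda_2: element 0 above the incomparable elements 1 and 2.\<close>
definition Lambda2_le :: "nat \<Rightarrow> nat \<Rightarrow> bool" where
  "Lambda2_le u v \<longleftrightarrow> u = v \<or> v = 0"

definition poset3 :: "nat set" where
  "poset3 = {0, 1, 2}"

end

theory Submission imports Defs begin

lemma V2_iff:
  "has_induced_copy poset3 V2_le F \<longleftrightarrow>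
   (\<exists>a\<in>F. \<exists>b\<in>F. \<exists>c\<in>F. a \<subset> b \<and> a \<subset> c \<and> \<not> b \<subseteq> c \<and> \<not> c \<subseteq> b)"
proof
  assume "has_induced_copy poset3 V2_le F"
  then obtain f where f: "inj_on f poset3" "f ` poset3 \<subseteq> F"
    "\<forall>u\<in>poset3. \<forall>v\<in>poset3. V2_le u v \<longleftrightarrow> f u \<subseteq> f v"
    unfolding has_induced_copy_def by blast
  have d: "f 0 \<noteq> f 1" "f 0 \<noteq> f 2" using f(1) unfolding poset3_def inj_on_def by auto
  have "f 0 \<subseteq> f 1" "f 0 \<subseteq> f 2" "\<not> f 1 \<subseteq> f 2" "\<not> f 2 \<subseteq> f 1"
    using f(3) unfolding poset3_def V2_le_def by auto
  moreover have "f 0 \<in> F" "f 1 \<in> F" "f 2 \<in> F" using f(2) unfolding poset3_def by auto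
  ultimately show "\<exists>a\<in>F. \<exists>b\<in>F. \<exists>c\<in>F. a \<subset> b \<and> a \<subset> c \<and> \<not> b \<subseteq> c \<and> \<not> c \<subseteq> b"
    using d by blast
next
  assume "\<exists>a\<in>F. \<exists>b\<in>F. \<exists>c\<in>F. a \<subset> b \<and> a \<subset> c \<and> \<not> b \<subseteq> c \<and> \<not> c \<subseteq> b"
  then obtain a b c where h: "a \<in> F" "b \<in> F" "c \<in> F" "a \<subset> b" "a \<subset> c" "\<not> b \<subseteq> c" "\<not> c \<subseteq> b" by blast
  define f where "f = (\<lambda>k::nat. if k = 0 then a else if k = 1 then b else c)"
  have "inj_on f poset3" unfolding inj_on_def poset3_def f_def using h by auto
  moreover have "f ` poset3 \<subseteq> F" unfolding poset3_def f_def using h by auto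
  moreover have "\<forall>u\<in>poset3. \<forall>v\<in>poset3. V2_le u v \<longleftrightarrow> f u \<subseteq> f v"
    unfolding poset3_def f_def V2_le_def using h by auto
  ultimately show "has_induced_copy poset3 V2_le F" unfolding has_induced_copy_def by blast
qed

lemma L2_iff:
  "has_induced_copy poset3 Lambda2_le F \<longleftrightarrow>
   (\<exists>t\<in>F. \<exists>a\<in>F. \<exists>b\<in>F. a \<subset> t \<and> b \<subset> t \<and> \<not> a \<subseteq> b \<and> \<not> b \<subseteq> a)"
proof
  assume "has_induced_copy poset3 Lambda2_le F"
  then obtain f where f: "inj_on f poset3" "f ` poset3 \<subseteq> F"
    "\<forall>u\<in>poset3. \<forall>v\<in>poset3. Lambda2_le u v \<longleftrightarrow> f u \<subseteq> f v"
    unfolding has_induced_copy_def by blast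
  have d: "f 0 \<noteq> f 1" "f 0 \<noteq> f 2" using f(1) unfolding poset3_def inj_on_def by auto
  have "f 1 \<subseteq> f 0" "f 2 \<subseteq> f 0" "\<not> f 1 \<subseteq> f 2" "\<not> f 2 \<subseteq> f 1"
    using f(3) unfolding poset3_def Lambda2_le_def by auto
  moreover have "f 0 \<in> F" "f 1 \<in> F" "f 2 \<in> F" using f(2) unfolding poset3_def by auto
  ultimately show "\<exists>t\<in>F. \<exists>a\<in>F. \<exists>b\<in>F. a \<subset> t \<and> b \<subset> t \<and> \<not> a \<subseteq> b \<and> \<not> b \<subseteq> a"
    using d by blast
next
  assume "\<exists>t\<in>F. \<exists>a\<in>F. \<exists>b\<in>F. a \<subset> t \<and> b \<subset> t \<and> \<not> a \<subseteq> b \<and> \<not> b \<subseteq> a"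
  then obtain a b c where h: "a \<in> F" "b \<in> F" "c \<in> F" "b \<subset> a" "c \<subset> a" "\<not> b \<subseteq> c" "\<not> c \<subseteq> b" by blast
  define f where "f = (\<lambda>k::nat. if k = 0 then a else if k = 1 then b else c)"
  have "inj_on f poset3" unfolding inj_on_def poset3_def f_def using h by auto
  moreover have "f ` poset3 \<subseteq> F" unfolding poset3_def f_def using h by auto
  moreover have "\<forall>u\<in>poset3. \<forall>v\<in>poset3. Lambda2_le u v \<longleftrightarrow> f u \<subseteq> f v"
    unfolding poset3_def f_def Lambda2_le_def using h by auto
  ultimately show "has_induced_copy poset3 Lambda2_le F" unfolding has_induced_copy_def by blast
qed

definition comp :: "nat \<Rightarrow> nat set \<Rightarrow> nat set" where
  "comp n X = {1..n} - X"

lemma comp_comp: "X \<subseteq> {1..n} \<Longrightarrow> comp n (comp n X) = X"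
  unfolding comp_def by auto

lemma comp_sub: "X \<subseteq> {1..n} \<Longrightarrow> Y \<subseteq> {1..n} \<Longrightarrow> comp n X \<subseteq> comp n Y \<longleftrightarrow> Y \<subseteq> X"
  unfolding comp_def by auto

lemma comp_Pow: "comp n X \<in> Pow {1..n}"
  unfolding comp_def by auto

lemma inj_comp: "inj_on (comp n) (Pow {1..n})"
  unfolding inj_on_def comp_def by auto

lemma comp_comp_image: "G \<subseteq> Pow {1..n} \<Longrightarrow> comp n ` comp n ` G = G"
proof
  assume G: "G \<subseteq> Pow {1..n}"
  show "comp n ` comp n ` G \<subseteq> G"
  proof
    fix Y assume "Y \<in> comp n ` comp n ` G"
    then obtain X where "X \<in> G" "Y = comp n (comp n X)" by blast
    then show "Y \<in> G" using G comp_comp by (metis PowD subsetD)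
  qed
  show "G \<subseteq> comp n ` comp n ` G"
  proof
    fix X assume X: "X \<in> G"
    then have "X = comp n (comp n X)" using G comp_comp by (metis PowD subsetD)
    then show "X \<in> comp n ` comp n ` G" using X by blast
  qed
qed

lemma psub_comp:
  assumes "X \<subseteq> {1..n}" "Y \<subseteq> {1..n}"
  shows "comp n X \<subset> comp n Y \<longleftrightarrow> Y \<subset> X"
  using comp_sub[OF assms] comp_sub[OF assms(2,1)] unfolding psubset_eq by (metis subset_antisym)

lemma hasL_comp:
  assumes FP: "F \<subseteq> Pow {1..n}"
  shows "has_induced_copy poset3 Lambda2_le F \<longleftrightarrow> has_induced_copy poset3 V2_le (comp n ` F)"
proof -
  have s: "\<And>X Y. X \<in> F \<Longrightarrow> Y \<in> F \<Longrightarrow> comp n X \<subseteq> comp n Y \<longleftrightarrow> Y \<subseteq> X"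
    using FP comp_sub by (meson PowD subsetD)
  have p: "\<And>X Y. X \<in> F \<Longrightarrow> Y \<in> F \<Longrightarrow> comp n X \<subset> comp n Y \<longleftrightarrow> Y \<subset> X"
    using FP psub_comp by (meson PowD subsetD)
  show ?thesis unfolding L2_iff V2_iff
  proof
    assume "\<exists>t\<in>F. \<exists>a\<in>F. \<exists>b\<in>F. a \<subset> t \<and> b \<subset> t \<and> \<not> a \<subseteq> b \<and> \<not> b \<subseteq> a"
    then obtain t a b where h: "t\<in>F" "a\<in>F" "b\<in>F" "a \<subset> t" "b \<subset> t" "\<not> a \<subseteq> b" "\<not> b \<subseteq> a" by blast
    have 1: "comp n t \<subset> comp n a" using p[OF h(1) h(2)] h(4) by simp
    have 2: "comp n t \<subset> comp n b" using p[OF h(1) h(3)] h(5) by simp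
    have 3: "\<not> comp n a \<subseteq> comp n b" using s[OF h(2) h(3)] h(7) by simp
    have 4: "\<not> comp n b \<subseteq> comp n a" using s[OF h(3) h(2)] h(6) by simp
    have "comp n t \<in> comp n ` F" "comp n a \<in> comp n ` F" "comp n b \<in> comp n ` F" using h by simp_all
    then show "\<exists>a\<in>comp n ` F. \<exists>b\<in>comp n ` F. \<exists>c\<in>comp n ` F. a \<subset> b \<and> a \<subset> c \<and> \<not> b \<subseteq> c \<and> \<not> c \<subseteq> b"
      using 1 2 3 4 by blast
  next
    assume "\<exists>a\<in>comp n ` F. \<exists>b\<in>comp n ` F. \<exists>c\<in>comp n ` F. a \<subset> b \<and> a \<subset> c \<and> \<not> b \<subseteq> c \<and> \<not> c \<subseteq> b"
    then obtain t a b where h: "t\<in>F" "a\<in>F" "b\<in>F" "comp n t \<subset> comp n a" "comp n t \<subset> comp n b"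
       "\<not> comp n a \<subseteq> comp n b" "\<not> comp n b \<subseteq> comp n a" by blast
    have 1: "a \<subset> t" using p[OF h(1) h(2)] h(4) by simp
    have 2: "b \<subset> t" using p[OF h(1) h(3)] h(5) by simp
    have 3: "\<not> b \<subseteq> a" using s[OF h(2) h(3)] h(6) by simp
    have 4: "\<not> a \<subseteq> b" using s[OF h(3) h(2)] h(7) by simp
    show "\<exists>t\<in>F. \<exists>a\<in>F. \<exists>b\<in>F. a \<subset> t \<and> b \<subset> t \<and> \<not> a \<subseteq> b \<and> \<not> b \<subseteq> a"
      using h(1,2,3) 1 2 3 4 by blast
  qed
qed

lemma dual_sat:
  assumes F: "F \<subseteq> Pow {1..n}" and sat: "induced_saturated n poset3 V2_le (comp n ` F)"
  shows "induced_saturated n poset3 Lambda2_le F"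
proof -
  have s1: "\<not> has_induced_copy poset3 V2_le (comp n ` F)"
    using sat unfolding induced_saturated_def by (elim conjE)
  have s2: "\<forall>F'. comp n ` F \<subset> F' \<and> F' \<subseteq> Pow {1..n} \<longrightarrow> has_induced_copy poset3 V2_le F'"
    using sat unfolding induced_saturated_def by (elim conjE)
  have nL: "\<not> has_induced_copy poset3 Lambda2_le F" using s1 hasL_comp[OF F] by simp
  have up: "\<And>F'. F \<subset> F' \<Longrightarrow> F' \<subseteq> Pow {1..n} \<Longrightarrow> has_induced_copy poset3 Lambda2_le F'"
  proof -
    fix F' assume h1: "F \<subset> F'" and h2: "F' \<subseteq> Pow {1..n}"
    have "comp n ` F \<subseteq> comp n ` F'" using h1 by (intro image_mono) simp
    moreover have "comp n ` F \<noteq> comp n ` F'"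
    proof
      assume "comp n ` F = comp n ` F'"
      then have "F = F'" using inj_on_image_eq_iff[OF inj_comp F h2] by simp
      then show False using h1 by simp
    qed
    moreover have "comp n ` F' \<subseteq> Pow {1..n}" using comp_Pow by (intro image_subsetI)
    ultimately have "has_induced_copy poset3 V2_le (comp n ` F')"
      using s2 by (simp add: psubset_eq)
    then show "has_induced_copy poset3 Lambda2_le F'" using hasL_comp[OF h2] by simp
  qed
  show ?thesis unfolding induced_saturated_def using F nL up by blast
qed

lemma symdiff_inter:
  "((X - Y) \<union> (Y - X)) \<inter> S = ((X \<inter> S) - (Y \<inter> S)) \<union> ((Y \<inter> S) - (X \<inter> S))"
  by blast

lemma merge:
  fixes U :: "nat set" and H :: "nat set set"
  assumes "finite U" "finite H" "H \<noteq> {}"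
    "\<forall>S. S \<subseteq> U \<longrightarrow> S \<noteq> {} \<longrightarrow> (\<exists>A\<in>H. \<exists>A'\<in>H. card (((A - A') \<union> (A' - A)) \<inter> S) = 1)"
  shows "card U + 1 \<le> card H"
  using assms
proof (induction "card U" arbitrary: U H)
  case 0
  then show ?case by (simp add: Suc_leI card_gt_0_iff)
next
  case (Suc m)
  then have "U \<noteq> {}" by auto
  then obtain A A' where AA: "A \<in> H" "A' \<in> H" "card (((A - A') \<union> (A' - A)) \<inter> U) = 1"
    using Suc.prems(4) by blast
  then obtain u where u: "((A - A') \<union> (A' - A)) \<inter> U = {u}" by (meson card_1_singletonE)
  then have uU: "u \<in> U" by blast
  have AneA': "A \<noteq> A'" using u by auto
  define H' where "H' = H - {A'}"
  define U' where "U' = U - {u}"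
  define r where "r = (\<lambda>X. if X = A' then A else X)"
  have agree: "\<And>S. S \<subseteq> U' \<Longrightarrow> A \<inter> S = A' \<inter> S"
  proof -
    fix S assume S: "S \<subseteq> U'"
    show "A \<inter> S = A' \<inter> S"
    proof (rule ccontr)
      assume "A \<inter> S \<noteq> A' \<inter> S"
      then obtain x where "x \<in> S" "x \<in> (A - A') \<union> (A' - A)" by blast
      then have "x \<in> ((A - A') \<union> (A' - A)) \<inter> U" "x \<noteq> u" using S unfolding U'_def by auto
      then show False using u by blast
    qed
  qed
  have rS: "\<And>S X. S \<subseteq> U' \<Longrightarrow> r X \<inter> S = X \<inter> S"
    unfolding r_def using agree by auto
  have rH: "\<And>X. X \<in> H \<Longrightarrow> r X \<in> H'"
    unfolding r_def H'_def using AA AneA' by auto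
  have "card U' + 1 \<le> card H'"
  proof (rule Suc.hyps)
    show "m = card U'" using Suc.hyps(2) uU Suc.prems(1) unfolding U'_def by simp
    show "finite U'" using Suc.prems(1) unfolding U'_def by simp
    show "finite H'" using Suc.prems(2) unfolding H'_def by simp
    show "H' \<noteq> {}" using AA AneA' unfolding H'_def by auto
    show "\<forall>S. S \<subseteq> U' \<longrightarrow> S \<noteq> {} \<longrightarrow> (\<exists>A\<in>H'. \<exists>A'\<in>H'. card (((A - A') \<union> (A' - A)) \<inter> S) = 1)"
    proof (intro allI impI)
      fix S assume S: "S \<subseteq> U'" "S \<noteq> {}"
      then have "S \<subseteq> U" unfolding U'_def by auto
      then obtain B B' where BB: "B \<in> H" "B' \<in> H" "card (((B - B') \<union> (B' - B)) \<inter> S) = 1"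
        using Suc.prems(4) S(2) by blast
      have "((r B - r B') \<union> (r B' - r B)) \<inter> S = ((B - B') \<union> (B' - B)) \<inter> S"
        unfolding symdiff_inter rS[OF S(1)] ..
      then show "\<exists>A\<in>H'. \<exists>A'\<in>H'. card (((A - A') \<union> (A' - A)) \<inter> S) = 1"
        using BB rH by metis
    qed
  qed
  moreover have "card H' = card H - 1" unfolding H'_def using AA Suc.prems(2) by simp
  moreover have "card U' = card U - 1" unfolding U'_def using uU Suc.prems(1) by simp
  moreover have "card H \<ge> 1" using Suc.prems(2,3) by (simp add: Suc_leI card_gt_0_iff)
  ultimately show ?case using Suc.hyps(2) by linarith
qed


lemma L_lower:
  assumes sat: "induced_saturated n poset3 Lambda2_le G"
  shows "n + 1 \<le> card G"
proof -
  have GP: "G \<subseteq> Pow {1..n}" using sat unfolding induced_saturated_def by blast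
  have nL: "\<not> (\<exists>t\<in>G. \<exists>a\<in>G. \<exists>b\<in>G. a \<subset> t \<and> b \<subset> t \<and> \<not> a \<subseteq> b \<and> \<not> b \<subseteq> a)"
    using sat unfolding induced_saturated_def L2_iff by (elim conjE)
  have free: "\<And>t a b. t \<in> G \<Longrightarrow> a \<in> G \<Longrightarrow> b \<in> G \<Longrightarrow> a \<subset> t \<Longrightarrow> b \<subset> t \<Longrightarrow> a \<subseteq> b \<or> b \<subseteq> a"
  proof -
    fix t a b assume "t \<in> G" "a \<in> G" "b \<in> G" "a \<subset> t" "b \<subset> t"
    then show "a \<subseteq> b \<or> b \<subseteq> a" using nL by blast
  qed
  have addX: "\<And>X. X \<subseteq> {1..n} \<Longrightarrow> X \<notin> G \<Longrightarrow>
      \<exists>t\<in>insert X G. \<exists>a\<in>insert X G. \<exists>b\<in>insert X G. a \<subset> t \<and> b \<subset> t \<and> \<not> a \<subseteq> b \<and> \<not> b \<subseteq> a"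
  proof -
    fix X assume X: "X \<subseteq> {1..n}" "X \<notin> G"
    have up: "\<forall>F'. G \<subset> F' \<and> F' \<subseteq> Pow {1..n} \<longrightarrow> has_induced_copy poset3 Lambda2_le F'"
      using sat unfolding induced_saturated_def by (elim conjE)
    have "G \<subset> insert X G \<and> insert X G \<subseteq> Pow {1..n}" using X GP by auto
    then have "has_induced_copy poset3 Lambda2_le (insert X G)"
      using up by simp
    then show "\<exists>t\<in>insert X G. \<exists>a\<in>insert X G. \<exists>b\<in>insert X G. a \<subset> t \<and> b \<subset> t \<and> \<not> a \<subseteq> b \<and> \<not> b \<subseteq> a"
      unfolding L2_iff .
  qed
  have finG: "finite G" using GP by (meson finite_Pow_iff finite_atLeastAtMost finite_subset)
  have finM: "\<And>X. X \<in> G \<Longrightarrow> finite X" using GP by (meson PowD finite_atLeastAtMost finite_subset subsetD)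
  have empty: "{} \<in> G"
  proof (rule ccontr)
    assume "{} \<notin> G"
    then obtain t a b where h: "t\<in>insert {} G" "a\<in>insert {} G" "b\<in>insert {} G" "a \<subset> t" "b \<subset> t"
        "\<not> a \<subseteq> b" "\<not> b \<subseteq> a"
      using addX[of "{}"] by blast
    have "t \<noteq> {}" "a \<noteq> {}" "b \<noteq> {}" using h by auto
    then have "t \<in> G" "a \<in> G" "b \<in> G" using h(1,2,3) by auto
    from free[OF this h(4,5)] show False using h(6,7) by blast
  qed
  have cover: "\<And>i. i \<in> {1..n} \<Longrightarrow> \<exists>B\<in>G. i \<in> B"
  proof -
    fix i assume i: "i \<in> {1..n}"
    show "\<exists>B\<in>G. i \<in> B"
    proof (cases "{i} \<in> G")
      case True then show ?thesis by blast
    next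
      case False
      then obtain t a b where h: "t\<in>insert {i} G" "a\<in>insert {i} G" "b\<in>insert {i} G" "a \<subset> t" "b \<subset> t"
          "\<not> a \<subseteq> b" "\<not> b \<subseteq> a"
        using addX[of "{i}"] i by blast
      have "t \<noteq> {i}"
      proof
        assume "t = {i}"
        then have "a = {}" "b = {}" using h(4,5) by auto
        then show False using h by blast
      qed
      then have tG: "t \<in> G" using h by blast
      show ?thesis
      proof (cases "a = {i} \<or> b = {i}")
        case True then show ?thesis using h(4,5) tG by blast
      next
        case False
        then have "a \<in> G" "b \<in> G" using h(2,3) by auto
        from free[OF tG this h(4,5)] show ?thesis using h(6,7) by blast
      qed
    qed
  qed
  have pair: "\<And>S. S \<subseteq> {1..n} \<Longrightarrow> S \<noteq> {} \<Longrightarrow> \<exists>A\<in>G. \<exists>A'\<in>G. A \<subseteq> A' \<and> card (S \<inter> (A' - A)) = 1"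
  proof (rule ccontr)
    fix S assume S: "S \<subseteq> {1..n}" "S \<noteq> {}"
    assume "\<not> (\<exists>A\<in>G. \<exists>A'\<in>G. A \<subseteq> A' \<and> card (S \<inter> (A' - A)) = 1)"
    then have no: "\<And>A A'. A \<in> G \<Longrightarrow> A' \<in> G \<Longrightarrow> A \<subseteq> A' \<Longrightarrow> card (S \<inter> (A' - A)) \<noteq> 1" by blast
    define Q where "Q = {P \<in> G. \<exists>B\<in>G. P \<subset> B \<and> S \<inter> (B - P) \<noteq> {}}"
    obtain s0 where "s0 \<in> S" using S by blast
    then obtain B0 where "B0 \<in> G" "s0 \<in> B0" using cover S by blast
    then have "{} \<in> Q" unfolding Q_def using empty \<open>s0 \<in> S\<close> by blast
    have finQ: "finite Q" unfolding Q_def using finG by simp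
    obtain P where PQ: "P \<in> Q" and Pmax: "\<And>P'. P' \<in> Q \<Longrightarrow> card P' \<le> card P"
    proof -
      have "Max (card ` Q) \<in> card ` Q" using finQ \<open>{} \<in> Q\<close> by (intro Max_in) auto
      then obtain P where "P \<in> Q" "card P = Max (card ` Q)" by auto
      moreover have "\<And>P'. P' \<in> Q \<Longrightarrow> card P' \<le> Max (card ` Q)" using finQ by simp
      ultimately show ?thesis using that by metis
    qed
    have PG: "P \<in> G" using PQ unfolding Q_def by blast
    define R where "R = {B \<in> G. P \<subset> B \<and> S \<inter> (B - P) \<noteq> {}}"
    have "R \<noteq> {}" using PQ unfolding Q_def R_def by blast
    have finR: "finite R" unfolding R_def using finG by simp
    obtain B where BR: "B \<in> R" and Bmin: "\<And>B'. B' \<in> R \<Longrightarrow> card B \<le> card B'"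
    proof -
      have "Min (card ` R) \<in> card ` R" using finR \<open>R \<noteq> {}\<close> by (intro Min_in) auto
      then obtain B where "B \<in> R" "card B = Min (card ` R)" by auto
      moreover have "\<And>B'. B' \<in> R \<Longrightarrow> Min (card ` R) \<le> card B'" using finR by simp
      ultimately show ?thesis using that by metis
    qed
    have BG: "B \<in> G" "P \<subset> B" "S \<inter> (B - P) \<noteq> {}" using BR unfolding R_def by auto
    have between: "\<And>Z. Z \<in> G \<Longrightarrow> P \<subset> Z \<Longrightarrow> Z \<subset> B \<Longrightarrow> False"
    proof -
      fix Z assume Z: "Z \<in> G" "P \<subset> Z" "Z \<subset> B"
      show False
      proof (cases "S \<inter> (Z - P) = {}")
        case False
        then have "Z \<in> R" unfolding R_def using Z by blast
        then have "card B \<le> card Z" using Bmin by blast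
        moreover have "card Z < card B" using Z(3) finM[OF BG(1)] by (simp add: psubset_card_mono)
        ultimately show False by simp
      next
        case True
        then have "S \<inter> (B - Z) \<noteq> {}" using BG(3) by blast
        then have "Z \<in> Q" unfolding Q_def using Z BG(1) by blast
        then have "card Z \<le> card P" using Pmax by blast
        moreover have "card P < card Z" using Z(2) finM[OF Z(1)] by (simp add: psubset_card_mono)
        ultimately show False by simp
      qed
    qed
    obtain s where s: "s \<in> S \<inter> (B - P)" using BG(3) by blast
    have "card (S \<inter> (B - P)) \<noteq> 1" using no[OF PG BG(1)] BG(2) by blast
    then have "S \<inter> (B - P) \<noteq> {s}" by auto
    then obtain t where t: "t \<in> S \<inter> (B - P)" "t \<noteq> s" using s by blast
    define X where "X = insert s P"
    have XB: "X \<subset> B" unfolding X_def using s t BG(2) by blast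
    have PX: "P \<subset> X" unfolding X_def using s by blast
    have Xsub: "X \<subseteq> {1..n}" using XB BG(1) GP by blast
    have XG: "X \<notin> G" using between PX XB by blast
    have key: "\<And>t0 b. t0 \<in> G \<Longrightarrow> b \<in> G \<Longrightarrow> X \<subset> t0 \<Longrightarrow> b \<subset> t0 \<Longrightarrow> \<not> b \<subseteq> X \<Longrightarrow> \<not> X \<subseteq> b \<Longrightarrow> False"
    proof -
      fix t0 b assume h: "t0 \<in> G" "b \<in> G" "X \<subset> t0" "b \<subset> t0" "\<not> b \<subseteq> X" "\<not> X \<subseteq> b"
      have "P \<subset> t0" using PX h(3) by blast
      then have "b \<subseteq> P \<or> P \<subseteq> b" using free[OF h(1) h(2) PG h(4)] by blast
      then have Pb: "P \<subseteq> b" using PX h(5) by blast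
      have sb: "s \<notin> b" using h(6) Pb unfolding X_def by blast
      have "P \<subset> b" using Pb sb h(5) PX by blast
      have "s \<in> t0" using h(3) unfolding X_def by blast
      then have "S \<inter> (t0 - b) \<noteq> {}" using s sb by blast
      then have "b \<in> Q" unfolding Q_def using h by blast
      then have "card b \<le> card P" using Pmax by blast
      moreover have "card P < card b" using \<open>P \<subset> b\<close> finM[OF h(2)] by (simp add: psubset_card_mono)
      ultimately show False by simp
    qed
    obtain t0 a b where h: "t0\<in>insert X G" "a\<in>insert X G" "b\<in>insert X G" "a \<subset> t0" "b \<subset> t0"
        "\<not> a \<subseteq> b" "\<not> b \<subseteq> a"
      using addX[OF Xsub XG] by blast
    show False
    proof (cases "t0 = X")
      case True
      then have "a \<in> G" "b \<in> G" "a \<subset> B" "b \<subset> B" using h XB by auto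
      from free[OF BG(1) this] show False using h(6,7) by blast
    next
      case False
      then have t0G: "t0 \<in> G" using h(1) by blast
      show False
      proof (cases "a = X")
        case True
        then have "b \<noteq> X" using h(6) by blast
        then have "b \<in> G" using h(3) by simp
        from key[OF t0G this] show False using h True by blast
      next
        case aX: False
        show False
        proof (cases "b = X")
          case True
          have "a \<in> G" using h(2) aX by simp
          from key[OF t0G this] show False using h True by blast
        next
          case False
          then have "a \<in> G" "b \<in> G" using h(2,3) aX by auto
          from free[OF t0G this h(4,5)] show False using h(6,7) by blast
        qed
      qed
    qed
  qed
  have "card {1..n} + 1 \<le> card G"
  proof (rule merge)
    show "finite {1..n}" by simp
    show "finite G" by fact
    show "G \<noteq> {}" using empty by blast
    show "\<forall>S. S \<subseteq> {1..n} \<longrightarrow> S \<noteq> {} \<longrightarrow> (\<exists>A\<in>G. \<exists>A'\<in>G. card (((A - A') \<union> (A' - A)) \<inter> S) = 1)"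
    proof (intro allI impI)
      fix S assume "S \<subseteq> {1..n}" "S \<noteq> {}"
      then obtain A A' where "A \<in> G" "A' \<in> G" "A \<subseteq> A'" "card (S \<inter> (A' - A)) = 1" using pair by blast
      moreover have "((A - A') \<union> (A' - A)) \<inter> S = S \<inter> (A' - A)" using \<open>A \<subseteq> A'\<close> by blast
      ultimately show "\<exists>A\<in>G. \<exists>A'\<in>G. card (((A - A') \<union> (A' - A)) \<inter> S) = 1" by metis
    qed
  qed
  then show ?thesis by simp
qed


definition chainF :: "nat \<Rightarrow> nat set set" where
  "chainF n = (\<lambda>k. {1..k}) ` {0..n}"

lemma chain_card: "card (chainF n) = n + 1"
proof -
  have "inj_on (\<lambda>k. {1..k::nat}) {0..n}"
  proof (rule inj_onI)
    fix x y :: nat assume "{1..x} = {1..y}"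
    then have "card {1..x} = card {1..y}" by (rule arg_cong)
    moreover have "\<And>k::nat. card {1..k} = k" by simp
    ultimately show "x = y" by metis
  qed
  then show ?thesis unfolding chainF_def by (simp add: card_image)
qed

lemma chain_sat: "induced_saturated n poset3 V2_le (chainF n)"
  unfolding induced_saturated_def
proof (intro conjI allI impI)
  show "chainF n \<subseteq> Pow {1..n}" unfolding chainF_def by auto
  have comparable: "\<And>b c. b \<in> chainF n \<Longrightarrow> c \<in> chainF n \<Longrightarrow> b \<subseteq> c \<or> c \<subseteq> b"
    unfolding chainF_def by (auto simp: le_cases)
  show "\<not> has_induced_copy poset3 V2_le (chainF n)"
    unfolding V2_iff using comparable by blast
next
  fix F' assume h: "chainF n \<subset> F' \<and> F' \<subseteq> Pow {1..n}"
  then obtain X where X: "X \<in> F'" "X \<notin> chainF n" by blast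
  have Xn: "X \<subseteq> {1..n}" using X h by blast
  have "X \<noteq> {1..n}" using X unfolding chainF_def by auto
  then obtain m where m: "m \<in> {1..n}" "m \<notin> X" using Xn by blast
  define j where "j = (LEAST m. 1 \<le> m \<and> m \<notin> X)"
  have j1: "1 \<le> j \<and> j \<notin> X" unfolding j_def by (rule LeastI[of _ m]) (use m in auto)
  have jn: "j \<le> n" unfolding j_def using m by (intro Least_le[THEN order_trans]) auto
  have below: "\<And>k. 1 \<le> k \<Longrightarrow> k < j \<Longrightarrow> k \<in> X"
    using not_less_Least unfolding j_def by blast
  define a where "a = {1..j-1}"
  define c where "c = {1..j}"
  have aC: "a \<in> chainF n" unfolding a_def chainF_def using jn by (intro image_eqI[of _ _ "j-1"]) auto
  have cC: "c \<in> chainF n" unfolding c_def chainF_def using jn by (intro image_eqI[of _ _ "j"]) auto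
  have aF: "a \<in> F'" using h aC by blast
  have cF: "c \<in> F'" using h cC by blast
  have aX: "a \<subseteq> X" unfolding a_def using below j1 by auto
  have "a \<noteq> X" using X aC by blast
  then have "a \<subset> X" using aX by blast
  moreover have "a \<subset> c" unfolding a_def c_def using j1 by auto
  moreover have "\<not> c \<subseteq> X" unfolding c_def using j1 by auto
  moreover have "\<not> X \<subseteq> c"
  proof
    assume "X \<subseteq> c"
    have "X \<subseteq> a"
    proof
      fix x assume "x \<in> X"
      then have "x \<in> {1..j}" "x \<noteq> j" using \<open>X \<subseteq> c\<close> j1 unfolding c_def by auto
      then show "x \<in> a" unfolding a_def by auto
    qed
    then have "X = a" using aX by blast
    then show False using X aC by blast
  qed
  ultimately show "has_induced_copy poset3 V2_le F'"
    unfolding V2_iff using aF cF X(1) by blast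
qed

theorem theorem1p4:
  fixes n :: nat
  assumes "n \<ge> 2"
  shows "isat n poset3 V2_le = n + 1 \<and> isat n poset3 Lambda2_le = n + 1"
proof
  have lowV: "\<And>F. induced_saturated n poset3 V2_le F \<Longrightarrow> n + 1 \<le> card F"
  proof -
    fix F assume F: "induced_saturated n poset3 V2_le F"
    have FP: "F \<subseteq> Pow {1..n}" using F unfolding induced_saturated_def by blast
    have GP: "comp n ` F \<subseteq> Pow {1..n}" using comp_Pow by blast
    have cc: "comp n ` comp n ` F = F" by (rule comp_comp_image[OF FP])
    have "induced_saturated n poset3 V2_le (comp n ` comp n ` F)"
      unfolding cc by (rule F)
    then have "induced_saturated n poset3 Lambda2_le (comp n ` F)"
      by (rule dual_sat[OF GP])
    then have "n + 1 \<le> card (comp n ` F)" by (rule L_lower)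
    moreover have "card (comp n ` F) = card F"
      using inj_on_subset[OF inj_comp FP] by (simp add: card_image)
    ultimately show "n + 1 \<le> card F" by simp
  qed
  show "isat n poset3 V2_le = n + 1"
    unfolding isat_def
  proof (rule cInf_eq_minimum)
    show "n + 1 \<in> card ` {F. induced_saturated n poset3 V2_le F}"
      using chain_sat chain_card by (intro image_eqI[of _ _ "chainF n"]) auto
    show "\<And>x. x \<in> card ` {F. induced_saturated n poset3 V2_le F} \<Longrightarrow> n + 1 \<le> x"
      using lowV by blast
  qed
  have CP: "chainF n \<subseteq> Pow {1..n}" using chain_sat unfolding induced_saturated_def by blast
  have GP: "comp n ` chainF n \<subseteq> Pow {1..n}" using comp_Pow by blast
  have cc: "comp n ` comp n ` chainF n = chainF n" by (rule comp_comp_image[OF CP])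
  have "induced_saturated n poset3 V2_le (comp n ` comp n ` chainF n)"
    unfolding cc by (rule chain_sat)
  then have satL: "induced_saturated n poset3 Lambda2_le (comp n ` chainF n)"
    by (rule dual_sat[OF GP])
  have cardL: "card (comp n ` chainF n) = n + 1"
    using inj_on_subset[OF inj_comp CP] chain_card by (simp add: card_image)
  show "isat n poset3 Lambda2_le = n + 1"
    unfolding isat_def
  proof (rule cInf_eq_minimum)
    show "n + 1 \<in> card ` {F. induced_saturated n poset3 Lambda2_le F}"
      using satL cardL by (intro image_eqI[of _ _ "comp n ` chainF n"]) auto
    show "\<And>x. x \<in> card ` {F. induced_saturated n poset3 Lambda2_le F} \<Longrightarrow> n + 1 \<le> x"
      using L_lower by blast
  qed
qed

end
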